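(* (i) $\simeq$ and $\simeq_\omega$ are congruences on monitors, i.e. equivalence relations preserved by $a.\_$ (for every $a\in\mathit{Act}$) and by $+$. (ii) $\simeq\ \subseteq\ \simeq_\omega$, and the inclusion is strict when $\mathit{Act}$ is finite. (iii) If $\mathit{Act}$ is infinite then $\simeq\ =\ \simeq_\omega$.
   Context: Let $\mathit{Act}$ be a nonempty set of actions, $\tau\notin\mathit{Act}$, and $\mathit{Var}$ a countably infinite set of variables disjoint from $\mathit{Act}\cup\{\tau\}$. Monitors are the terms $m,n ::= v \mid a.m \mid m+n \mid x$ ($a\in\mathit{Act}$, $x\in\mathit{Var}$), with verdicts $v ::= \mathit{end}\mid\mathit{yes}\mid\mathit{no}$; a monitor is closed if it contains no variable; a (closed) substitution maps variables to (closed) monitors, and $\sigma(m)$ denotes its application. Transitions $\xrightarrow{\alpha}$ ($\alpha\in\mathit{Act}\cup\{\tau\}$) are the least relation with $a.m\xrightarrow{a}m$; $m\xrightarrow{\alpha}m'$ implies $m+n\xrightarrow{\alpha}m'$ and $n+m\xrightarrow{\alpha}m'$; and $v\xrightarrow{\alpha}v$ for every verdict $v$. Weak transitions: $m\xRightarrow{\varepsilon}m'$ iff $m(\xrightarrow{\tau})^*m'$; $m\xRightarrow{a}m'$ iff $m\xRightarrow{\varepsilon}\xrightarrow{a}\xRightarrow{\varepsilon}m'$; $m\xRightarrow{as'}m'$ ($s'\ne\varepsilon$) iff $m\xRightarrow{a}m_1\xRightarrow{s'}m'$ for some $m_1$. For closed $m$: $L_a(m)=\{s\in\mathit{Act}^*\mid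 m\xRightarrow{s}\mathit{yes}\}$, $L_r(m)=\{s\in\mathit{Act}^*\mid m\xRightarrow{s}\mathit{no}\}$. For closed $m,n$: $m\simeq n$ (verdict equivalence) iff $L_a(m)=L_a(n)$ and $L_r(m)=L_r(n)$; $m\simeq_\omega n$ ($\omega$-verdict equivalence) iff $L_a(m)\cdot\mathit{Act}^\omega=L_a(n)\cdot\mathit{Act}^\omega$ and $L_r(m)\cdot\mathit{Act}^\omega=L_r(n)\cdot\mathit{Act}^\omega$, where $\mathit{Act}^\omega$ is the set of infinite sequences over $\mathit{Act}$ and $\cdot$ is concatenation. For open monitors, $m\simeq n$ (resp. $m\simeq_\omega n$) iff $\sigma(m)\simeq\sigma(n)$ (resp. $\sigma(m)\simeq_\omega\sigma(n)$) for every closed substitution $\sigma$. *)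

theory Defs
  imports Main
begin

text \<open>Verdicts and monitors. Actions are a type 'a; the countably infinite
set of variables is rendered as nat. The silent action tau is None.\<close>

datatype verdict = End | Yes | No

datatype 'a mon = Verd verdict | Pre 'a "'a mon" | Sum "'a mon" "'a mon" | Var nat

primrec closed :: "'a mon \<Rightarrow> bool" where
  "closed (Verd v) = True"
| "closed (Pre a m) = closed m"
| "closed (Sum m n) = (closed m \<and> closed n)"
| "closed (Var x) = False"

primrec subst :: "(nat \<Rightarrow> 'a mon) \<Rightarrow> 'a mon \<Rightarrow> 'a mon" where
  "subst \<sigma> (Verd v) = Verd v"
| "subst \<sigma> (Pre a m) = Pre a (subst \<sigma> m)"
| "subst \<sigma> (Sum m n) = Sum (subst \<sigma> m) (subst \<sigma> n)"
| "subst \<sigma> (Var x) = \<sigma> x"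

definition closed_subst :: "(nat \<Rightarrow> 'a mon) \<Rightarrow> bool" where
  "closed_subst \<sigma> \<longleftrightarrow> (\<forall>x. closed (\<sigma> x))"

inductive step :: "'a mon \<Rightarrow> 'a option \<Rightarrow> 'a mon \<Rightarrow> bool" where
  pre: "step (Pre a m) (Some a) m"
| sumL: "step m \<alpha> m' \<Longrightarrow> step (Sum m n) \<alpha> m'"
| sumR: "step m \<alpha> m' \<Longrightarrow> step (Sum n m) \<alpha> m'"
| verd: "step (Verd v) \<alpha> (Verd v)"

definition tau_star :: "'a mon \<Rightarrow> 'a mon \<Rightarrow> bool" where
  "tau_star = (\<lambda>m m'. step m None m')\<^sup>*\<^sup>*"

definition weak_act :: "'a mon \<Rightarrow> 'a \<Rightarrow> 'a mon \<Rightarrow> bool" where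
  "weak_act m a m' \<longleftrightarrow>
     (\<exists>m1 m2. tau_star m m1 \<and> step m1 (Some a) m2 \<and> tau_star m2 m')"

fun weak_tr :: "'a mon \<Rightarrow> 'a list \<Rightarrow> 'a mon \<Rightarrow> bool" where
  "weak_tr m [] m' = tau_star m m'"
| "weak_tr m [a] m' = weak_act m a m'"
| "weak_tr m (a # b # s) m' = (\<exists>m1. weak_act m a m1 \<and> weak_tr m1 (b # s) m')"

definition La :: "'a mon \<Rightarrow> 'a list set" where
  "La m = {s. weak_tr m s (Verd Yes)}"

definition Lr :: "'a mon \<Rightarrow> 'a list set" where
  "Lr m = {s. weak_tr m s (Verd No)}"

text \<open>L \<cdot> Act^omega, infinite sequences as functions nat \<Rightarrow> 'a.\<close>
definition omega_ext :: "'a list set \<Rightarrow> (nat \<Rightarrow> 'a) set" where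
  "omega_ext L = {w. \<exists>s\<in>L. \<forall>i<length s. w i = s ! i}"

definition verdict_eq_closed :: "'a mon \<Rightarrow> 'a mon \<Rightarrow> bool" where
  "verdict_eq_closed m n \<longleftrightarrow> La m = La n \<and> Lr m = Lr n"

definition omega_eq_closed :: "'a mon \<Rightarrow> 'a mon \<Rightarrow> bool" where
  "omega_eq_closed m n \<longleftrightarrow>
     omega_ext (La m) = omega_ext (La n) \<and> omega_ext (Lr m) = omega_ext (Lr n)"

text \<open>Equivalences on all (possibly open) monitors via closed substitutions;
for closed monitors this coincides with the closed definitions since subst
acts as identity on them.\<close>
definition veq :: "'a mon \<Rightarrow> 'a mon \<Rightarrow> bool" where
  "veq m n \<longleftrightarrow> (\<forall>\<sigma>. closed_subst \<sigma> \<longrightarrow> verdict_eq_closed (subst \<sigma> m) (subst \<sigma> n))"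

definition veq_omega :: "'a mon \<Rightarrow> 'a mon \<Rightarrow> bool" where
  "veq_omega m n \<longleftrightarrow> (\<forall>\<sigma>. closed_subst \<sigma> \<longrightarrow> omega_eq_closed (subst \<sigma> m) (subst \<sigma> n))"

definition congruence :: "('a mon \<Rightarrow> 'a mon \<Rightarrow> bool) \<Rightarrow> bool" where
  "congruence R \<longleftrightarrow> equivp R
     \<and> (\<forall>a m n. R m n \<longrightarrow> R (Pre a m) (Pre a n))
     \<and> (\<forall>m m' n n'. R m m' \<and> R n n' \<longrightarrow> R (Sum m n) (Sum m' n'))"

end

theory Submission
  imports Defs
begin

fun wt :: "'a mon \<Rightarrow> 'a list \<Rightarrow> 'a mon \<Rightarrow> bool" where
  "wt m [] m' = tau_star m m'"
| "wt m (a # s) m' = (\<exists>m1 m2. tau_star m m1 \<and> step m1 (Some a) m2 \<and> wt m2 s m')"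

lemma wt_tau: "tau_star m k \<Longrightarrow> wt k s m' \<Longrightarrow> wt m s m'"
  by (cases s) (auto simp: tau_star_def intro: rtranclp_trans)

lemma weak_tr_wt: "weak_tr m s m' = wt m s m'"
proof (induction m s m' rule: weak_tr.induct)
  case (1 m m') then show ?case by simp
next
  case (2 m a m') then show ?case by (auto simp: weak_act_def)
next
  case (3 m a b s m')
  show ?case
  proof
    assume "weak_tr m (a # b # s) m'"
    then obtain k where k: "weak_act m a k" "weak_tr k (b # s) m'" by auto
    then obtain m1 m2 where "tau_star m m1" "step m1 (Some a) m2" "tau_star m2 k"
      by (auto simp: weak_act_def)
    moreover have "wt k (b # s) m'" using k 3 by simp
    ultimately show "wt m (a # b # s) m'" using wt_tau
      by (metis wt.simps(2))
  next
    assume "wt m (a # b # s) m'"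
    then obtain m1 m2 where h: "tau_star m m1" "step m1 (Some a) m2" "wt m2 (b # s) m'"
      by (metis wt.simps(2))
    have "weak_act m a m2" using h by (auto simp: weak_act_def tau_star_def)
    then show "weak_tr m (a # b # s) m'" using h 3 by auto
  qed
qed

lemma wt_append: "wt m (s @ t) m' = (\<exists>k. wt m s k \<and> wt k t m')"
proof (induction s arbitrary: m)
  case Nil
  then show ?case using wt_tau by (auto simp: tau_star_def)
next
  case (Cons a s)
  then show ?case by auto
qed

lemma wt_tau_end: "wt m s x \<Longrightarrow> tau_star x y \<Longrightarrow> wt m s y"
  using wt_append[of m s "[]" y] by auto

lemma step_verd: "step (Verd u) \<alpha> y \<Longrightarrow> y = Verd u"
  by (cases rule: step.cases) auto

lemma tau_verd: "tau_star (Verd u) k \<Longrightarrow> k = Verd u"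
  unfolding tau_star_def
  by (induction rule: rtranclp_induct) (auto dest: step_verd)

lemma wt_verd_target: "wt (Verd u) s k \<Longrightarrow> k = Verd u"
proof (induction s arbitrary: k)
  case Nil then show ?case by (simp add: tau_verd)
next
  case (Cons a s)
  then obtain m1 m2 where "tau_star (Verd u) m1" "step m1 (Some a) m2" "wt m2 s k" by auto
  then show ?case using Cons tau_verd step_verd by metis
qed

lemma wt_verd: "wt (Verd u) s (Verd u)"
proof (induction s)
  case Nil then show ?case by (simp add: tau_star_def)
next
  case (Cons a s)
  then show ?case by (auto simp: tau_star_def intro: step.verd)
qed

lemma wt_verd_iff: "wt (Verd u) s (Verd v) = (u = v)"
  using wt_verd wt_verd_target by blast

lemma tau_pre: "tau_star (Pre a m) k \<Longrightarrow> k = Pre a m"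
  unfolding tau_star_def
  by (erule converse_rtranclpE) (auto elim: step.cases)

lemma step_pre: "step (Pre a m) \<alpha> k \<Longrightarrow> \<alpha> = Some a \<and> k = m"
  by (cases rule: step.cases) auto

lemma wt_pre: "wt (Pre a m) s (Verd v) = (\<exists>s'. s = a # s' \<and> wt m s' (Verd v))"
proof (cases s)
  case Nil
  then show ?thesis using tau_pre by fastforce
next
  case (Cons b s')
  show ?thesis
  proof
    assume "wt (Pre a m) s (Verd v)"
    then obtain m1 m2 where "tau_star (Pre a m) m1" "step m1 (Some b) m2" "wt m2 s' (Verd v)"
      using Cons by auto
    then show "\<exists>s'. s = a # s' \<and> wt m s' (Verd v)" using Cons tau_pre step_pre by fastforce
  next
    assume "\<exists>s'. s = a # s' \<and> wt m s' (Verd v)"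
    then show "wt (Pre a m) s (Verd v)"
      by (metis wt.simps(2) rtranclp.rtrancl_refl tau_star_def step.pre)
  qed
qed

lemma step_sum: "step (Sum m n) \<alpha> k \<Longrightarrow> step m \<alpha> k \<or> step n \<alpha> k"
  by (cases rule: step.cases) auto

lemma tau_sum: "tau_star (Sum m n) k \<Longrightarrow> k = Sum m n \<or> tau_star m k \<or> tau_star n k"
  unfolding tau_star_def
  by (erule converse_rtranclpE) (auto dest: step_sum intro: converse_rtranclp_into_rtranclp)

lemma tau_sumL: "tau_star m k \<Longrightarrow> k \<noteq> m \<Longrightarrow> tau_star (Sum m n) k"
  unfolding tau_star_def
  by (erule converse_rtranclpE) (auto intro: step.sumL converse_rtranclp_into_rtranclp)

lemma tau_sumR: "tau_star m k \<Longrightarrow> k \<noteq> m \<Longrightarrow> tau_star (Sum n m) k"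
  unfolding tau_star_def
  by (erule converse_rtranclpE) (auto intro: step.sumR converse_rtranclp_into_rtranclp)

lemma wt_sum: "wt (Sum m n) s (Verd v) = (wt m s (Verd v) \<or> wt n s (Verd v))"
proof (cases s)
  case Nil
  show ?thesis
  proof
    assume "wt (Sum m n) s (Verd v)"
    then show "wt m s (Verd v) \<or> wt n s (Verd v)" using Nil tau_sum by fastforce
  next
    assume "wt m s (Verd v) \<or> wt n s (Verd v)"
    then show "wt (Sum m n) s (Verd v)"
    proof
      assume h: "wt m s (Verd v)"
      show ?thesis
      proof (cases "m = Verd v")
        case True
        then show ?thesis using Nil step.sumL[OF step.verd[of v None]]
          by (auto simp: tau_star_def)
      next
        case False then show ?thesis using Nil h tau_sumL by auto
      qed
    next
      assume h: "wt n s (Verd v)"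
      show ?thesis
      proof (cases "n = Verd v")
        case True
        then show ?thesis using Nil step.sumR[OF step.verd[of v None]]
          by (auto simp: tau_star_def)
      next
        case False then show ?thesis using Nil h tau_sumR by auto
      qed
    qed
  qed
next
  case (Cons b s')
  show ?thesis
  proof
    assume "wt (Sum m n) s (Verd v)"
    then obtain m1 m2 where h: "tau_star (Sum m n) m1" "step m1 (Some b) m2" "wt m2 s' (Verd v)"
      using Cons by auto
    from tau_sum[OF h(1)] show "wt m s (Verd v) \<or> wt n s (Verd v)"
    proof (elim disjE)
      assume "m1 = Sum m n"
      then have "step m (Some b) m2 \<or> step n (Some b) m2" using h step_sum by blast
      then show ?thesis using Cons h by (auto simp: tau_star_def)
    next
      assume "tau_star m m1" then show ?thesis using Cons h by auto
    next
      assume "tau_star n m1" then show ?thesis using Cons h by auto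
    qed
  next
    assume "wt m s (Verd v) \<or> wt n s (Verd v)"
    then show "wt (Sum m n) s (Verd v)"
    proof
      assume "wt m s (Verd v)"
      then obtain m1 m2 where h: "tau_star m m1" "step m1 (Some b) m2" "wt m2 s' (Verd v)"
        using Cons by auto
      show ?thesis
      proof (cases "m1 = m")
        case True
        then show ?thesis using h Cons by (auto simp: tau_star_def intro: step.sumL)
      next
        case False
        then show ?thesis using h Cons tau_sumL by fastforce
      qed
    next
      assume "wt n s (Verd v)"
      then obtain m1 m2 where h: "tau_star n m1" "step m1 (Some b) m2" "wt m2 s' (Verd v)"
        using Cons by auto
      show ?thesis
      proof (cases "m1 = n")
        case True
        then show ?thesis using h Cons by (auto simp: tau_star_def intro: step.sumR)
      next
        case False
        then show ?thesis using h Cons tau_sumR by fastforce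
      qed
    qed
  qed
qed

definition L :: "verdict \<Rightarrow> 'a mon \<Rightarrow> 'a list set" where
  "L v m = {s. wt m s (Verd v)}"

lemma La_L: "La m = L Yes m" and Lr_L: "Lr m = L No m"
  by (auto simp: La_def Lr_def L_def weak_tr_wt)

lemma L_pre: "L v (Pre a m) = Cons a ` L v m"
  by (auto simp: L_def wt_pre)

lemma L_sum: "L v (Sum m n) = L v m \<union> L v n"
  by (auto simp: L_def wt_sum)

lemma L_verd: "L v (Verd u) = (if u = v then UNIV else {})"
  by (auto simp: L_def wt_verd_iff)

lemma omega_un: "omega_ext (A \<union> B) = omega_ext A \<union> omega_ext B"
  by (auto simp: omega_ext_def)

lemma omega_cons: "omega_ext (Cons a ` A) = {w. w 0 = a \<and> (\<lambda>i. w (Suc i)) \<in> omega_ext A}"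
proof -
  have "(\<forall>i<length (a # s). w i = (a # s) ! i) = (w 0 = a \<and> (\<forall>i<length s. w (Suc i) = s ! i))"
    for w :: "nat \<Rightarrow> 'a" and s
    by (auto simp: less_Suc_eq_0_disj)
  then show ?thesis by (auto simp: omega_ext_def)
qed

lemma equivp_veq: "equivp veq"
  by (rule equivpI) (auto simp: reflp_def symp_def transp_def veq_def verdict_eq_closed_def)

lemma equivp_veqo: "equivp veq_omega"
  by (rule equivpI) (auto simp: reflp_def symp_def transp_def veq_omega_def omega_eq_closed_def)

lemma cong_veq: "congruence veq"
  unfolding congruence_def
  by (auto simp: equivp_veq veq_def verdict_eq_closed_def La_L Lr_L L_pre L_sum)

lemma cong_veqo: "congruence veq_omega"
  unfolding congruence_def
  by (auto simp: equivp_veqo veq_omega_def omega_eq_closed_def La_L Lr_L L_pre L_sum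
      omega_un omega_cons)

lemma veq_le: "veq \<le> veq_omega"
  by (auto simp: veq_def veq_omega_def verdict_eq_closed_def omega_eq_closed_def)

primrec acts :: "'a mon \<Rightarrow> 'a set" where
  "acts (Verd v) = {}"
| "acts (Pre a m) = insert a (acts m)"
| "acts (Sum m n) = acts m \<union> acts n"
| "acts (Var x) = {}"

lemma finite_acts: "finite (acts m)"
  by (induction m) auto

lemma step_acts: "step m \<alpha> m' \<Longrightarrow> acts m' \<subseteq> acts m"
  by (induction rule: step.induct) auto

lemma tau_acts: "tau_star m m' \<Longrightarrow> acts m' \<subseteq> acts m"
  unfolding tau_star_def
  by (induction rule: rtranclp_induct) (auto dest: step_acts)

lemma wt_acts: "wt m s m' \<Longrightarrow> acts m' \<subseteq> acts m"
proof (induction s arbitrary: m)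
  case Nil then show ?case by (simp add: tau_acts)
next
  case (Cons a s)
  then obtain m1 m2 where "tau_star m m1" "step m1 (Some a) m2" "wt m2 s m'" by auto
  then show ?case using Cons tau_acts step_acts by blast
qed

lemma step_fresh: "step m (Some b) m' \<Longrightarrow> b \<notin> acts m \<Longrightarrow> \<exists>v. m' = Verd v \<and> step m None m'"
proof (induction m "Some b" m' rule: step.induct)
  case (pre m) then show ?case by simp
next
  case (sumL m m' n) then show ?case by (auto intro: step.sumL)
next
  case (sumR m m' n) then show ?case by (auto intro: step.sumR)
next
  case (verd v) then show ?case by (auto intro: step.verd)
qed

lemma rep_fresh: "b \<notin> acts x \<Longrightarrow> wt x (replicate k b) (Verd v) \<Longrightarrow> tau_star x (Verd v)"
proof (cases k)
  case 0
  then show "wt x (replicate k b) (Verd v) \<Longrightarrow> tau_star x (Verd v)" by simp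
next
  case (Suc k')
  assume f: "b \<notin> acts x" and w: "wt x (replicate k b) (Verd v)"
  have "wt x (b # replicate k' b) (Verd v)" using w Suc by simp
  then obtain m1 m2 where h: "tau_star x m1" "step m1 (Some b) m2" "wt m2 (replicate k' b) (Verd v)"
    unfolding wt.simps(2) by blast
  have "b \<notin> acts m1" using f tau_acts[OF h(1)] by blast
  then obtain u where u: "m2 = Verd u" "step m1 None m2" using step_fresh[OF h(2) \<open>b \<notin> acts m1\<close>] by blast
  have "Verd v = Verd u" using wt_verd_target[OF h(3)[unfolded u(1)]] by simp
  then have "step m1 None (Verd v)" using u by simp
  then show ?thesis using h(1) unfolding tau_star_def
    by (rule rtranclp.rtrancl_into_rtrancl[rotated])
qed

lemma strip_fresh: "b \<notin> acts m \<Longrightarrow> wt m (s @ replicate k b) (Verd v) \<Longrightarrow> wt m s (Verd v)"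
proof -
  assume f: "b \<notin> acts m" and w: "wt m (s @ replicate k b) (Verd v)"
  then obtain x where x: "wt m s x" "wt x (replicate k b) (Verd v)" using wt_append by blast
  have "b \<notin> acts x" using f wt_acts[OF x(1)] by blast
  then have "tau_star x (Verd v)" using rep_fresh[OF _ x(2)] by blast
  then show ?thesis using wt_tau_end x(1) by blast
qed

lemma wt_extend: "wt m s (Verd v) \<Longrightarrow> wt m (s @ t) (Verd v)"
  using wt_append wt_verd by blast

lemma omega_to_L:
  assumes inf: "infinite (UNIV :: 'a set)"
    and eq: "omega_ext (L v (m :: 'a mon)) = omega_ext (L v n)"
    and s: "s \<in> L v m"
  shows "s \<in> L v n"
proof -
  obtain b where b: "b \<notin> acts n" using ex_new_if_finite[OF inf finite_acts] by blast
  define w where "w = (\<lambda>i. if i < length s then s ! i else b)"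
  have "w \<in> omega_ext (L v m)" using s by (auto simp: omega_ext_def w_def)
  then have "w \<in> omega_ext (L v n)" using eq by simp
  then obtain t where t: "t \<in> L v n" "\<forall>i<length t. w i = t ! i" by (auto simp: omega_ext_def)
  show ?thesis
  proof (cases "length t \<le> length s")
    case True
    have "t = take (length t) s"
      by (rule nth_equalityI) (use True t(2) in \<open>auto simp: w_def\<close>)
    then have "s = t @ drop (length t) s" by (metis append_take_drop_id)
    then show ?thesis using t(1) wt_extend by (metis L_def mem_Collect_eq)
  next
    case False
    have "t = s @ replicate (length t - length s) b"
      by (rule nth_equalityI) (use False t(2) in \<open>auto simp: w_def nth_append\<close>)
    then show ?thesis using t(1) strip_fresh[OF b] by (metis L_def mem_Collect_eq)
  qed
qed

lemma omega_L_eq: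
  assumes "infinite (UNIV :: 'a set)"
    and "omega_ext (L v (m :: 'a mon)) = omega_ext (L v n)"
  shows "L v m = L v n"
  using omega_to_L[OF assms] omega_to_L[OF assms(1) assms(2)[symmetric]] by blast

lemma veq_inf:
  assumes inf: "infinite (UNIV :: 'a set)"
  shows "(veq :: 'a mon \<Rightarrow> 'a mon \<Rightarrow> bool) = veq_omega"
proof (rule antisym[OF veq_le], intro le_funI le_boolI)
  fix m n :: "'a mon"
  assume "veq_omega m n"
  then show "veq m n"
    unfolding veq_def veq_omega_def verdict_eq_closed_def omega_eq_closed_def La_L Lr_L
    using omega_L_eq[OF inf] by blast
qed

definition mk :: "'a list \<Rightarrow> 'a mon" where
  "mk xs = foldr (\<lambda>a acc. Sum (Pre a (Verd Yes)) acc) xs (Verd End)"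

lemma closed_mk: "closed (mk xs)"
  by (induction xs) (auto simp: mk_def)

lemma subst_closed: "closed m \<Longrightarrow> subst \<sigma> m = m"
  by (induction m) auto

lemma L_mk_yes: "L Yes (mk xs) = {s. s \<noteq> [] \<and> hd s \<in> set xs}"
  by (induction xs) (auto simp: mk_def L_sum L_pre L_verd neq_Nil_conv)

lemma L_mk_no: "L No (mk xs) = {}"
  by (induction xs) (auto simp: mk_def L_sum L_pre L_verd)

lemma veq_fin: "finite (UNIV :: 'a set) \<Longrightarrow> \<not> (veq_omega \<le> (veq :: 'a mon \<Rightarrow> 'a mon \<Rightarrow> bool))"
proof
  assume "finite (UNIV :: 'a set)" and le: "veq_omega \<le> (veq :: 'a mon \<Rightarrow> 'a mon \<Rightarrow> bool)"
  then obtain xs :: "'a list" where xs: "set xs = UNIV" using finite_list by blast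
  have o1: "omega_ext (L Yes (mk xs)) = UNIV"
  proof -
    have "w \<in> omega_ext (L Yes (mk xs))" for w :: "nat \<Rightarrow> 'a"
    proof -
      have "[w 0] \<in> L Yes (mk xs)" using xs by (simp add: L_mk_yes)
      moreover have "\<forall>i<length [w 0]. w i = [w 0] ! i" by simp
      ultimately show ?thesis unfolding omega_ext_def by blast
    qed
    then show ?thesis by auto
  qed
  have o2: "omega_ext (UNIV :: 'a list set) = UNIV"
  proof (rule set_eqI)
    fix w :: "nat \<Rightarrow> 'a"
    have "[] \<in> (UNIV :: 'a list set) \<and> (\<forall>i<length ([] :: 'a list). w i = [] ! i)" by simp
    then show "w \<in> omega_ext (UNIV :: 'a list set) \<longleftrightarrow> w \<in> UNIV"
      unfolding omega_ext_def by blast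
  qed
  have "veq_omega (mk xs) (Verd Yes)"
  proof (unfold veq_omega_def, intro allI impI)
    fix \<sigma> :: "nat \<Rightarrow> 'a mon"
    have "subst \<sigma> (mk xs) = mk xs" by (rule subst_closed[OF closed_mk])
    then show "omega_eq_closed (subst \<sigma> (mk xs)) (subst \<sigma> (Verd Yes))"
      unfolding omega_eq_closed_def La_L Lr_L
      by (simp only: subst.simps(1) L_mk_no o1 L_verd if_True if_False verdict.distinct simp_thms o2)
  qed
  then have v: "veq (mk xs) (Verd Yes)" using le[THEN le_funD, THEN le_funD, THEN le_boolD] by blast
  define \<sigma>0 :: "nat \<Rightarrow> 'a mon" where "\<sigma>0 = (\<lambda>_. Verd End)"
  have cs: "closed_subst \<sigma>0" by (simp add: closed_subst_def \<sigma>0_def)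
  have "verdict_eq_closed (subst \<sigma>0 (mk xs)) (subst \<sigma>0 (Verd Yes))"
    using v cs unfolding veq_def by blast
  then have "verdict_eq_closed (mk xs) (Verd Yes)"
    by (simp only: subst_closed[OF closed_mk] subst.simps(1))
  then have "L Yes (mk xs) = L Yes (Verd Yes :: 'a mon)"
    by (simp add: verdict_eq_closed_def La_L)
  then have "[] \<in> L Yes (mk xs)" by (simp add: L_verd)
  then show False by (simp add: L_mk_yes)
qed

theorem mainTheorem2:
  shows "(congruence (veq :: 'a mon \<Rightarrow> 'a mon \<Rightarrow> bool)
          \<and> congruence (veq_omega :: 'a mon \<Rightarrow> 'a mon \<Rightarrow> bool))
       \<and> ((veq :: 'a mon \<Rightarrow> 'a mon \<Rightarrow> bool) \<le> veq_omega
          \<and> (finite (UNIV :: 'a set) \<longrightarrow> (veq :: 'a mon \<Rightarrow> 'a mon \<Rightarrow> bool) < veq_omega))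
       \<and> (infinite (UNIV :: 'a set) \<longrightarrow> (veq :: 'a mon \<Rightarrow> 'a mon \<Rightarrow> bool) = veq_omega)"
proof -
  have f: "finite (UNIV :: 'a set) \<longrightarrow> (veq :: 'a mon \<Rightarrow> 'a mon \<Rightarrow> bool) < veq_omega"
    unfolding less_le_not_le using veq_le veq_fin by blast
  have i: "infinite (UNIV :: 'a set) \<longrightarrow> (veq :: 'a mon \<Rightarrow> 'a mon \<Rightarrow> bool) = veq_omega"
    using veq_inf by blast
  show ?thesis
    apply (intro conjI)
        apply (rule cong_veq)
       apply (rule cong_veqo)
      apply (rule veq_le)
     apply (rule f)
    apply (rule i)
    done
qed

end
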